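(* Let $n=4$, $m=3$, $b=(1,0,0)^T$, $C=\mathrm{diag}(1,0,0,0)$, and let $A^1,A^2,A^3\in\mathbb{S}^4$ be such that for all $y\in\mathbb{R}^3$ $$C-\sum_{i=1}^3A^iy_i=\begin{pmatrix}1-y_1&0&-y_3&-y_3\\0&-y_2&-y_1&0\\-y_3&-y_1&-y_3&0\\-y_3&0&0&0\end{pmatrix},$$ i.e. $A^1$ has entries $(1,1)=1$, $(2,3)=(3,2)=1$ and zeros elsewhere; $A^2$ has entry $(2,2)=1$ and zeros elsewhere; $A^3$ has entries $(1,3)=(3,1)=(1,4)=(4,1)=(3,3)=1$ and zeros elsewhere. For the associated pair $\mathbf{P},\mathbf{D}$ (with $v(\mathbf{P})=1$, $v(\mathbf{D})=0$), the limiting pd-regularized optimal value function satisfies: 1. $v_a(\theta)=v(\mathbf{P})=1$ for all $\theta\in[0,\pi/2)$; 2. $v_a(\pi/2)=v(\mathbf{D})=0$.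
   Context: $\mathbf{P}$: $\min_X C\bullet X$ s.t. $A^i\bullet X=b_i$ ($i=1,\dots,m$), $X\succeq 0$; $\mathbf{D}$: $\max_y b^Ty$ s.t. $C-\sum_iA^iy_i\succeq 0$; $v(\cdot)$ denotes optimal value. For $\varepsilon,\eta\ge0$: $\mathbf{P}(\varepsilon,\eta)$: $\min_X (C+\varepsilon I)\bullet X$ s.t. $A^i\bullet X=b_i+\eta A^i\bullet I$, $X\succeq0$; $\mathbf{D}(\varepsilon,\eta)$: $\max_y \sum_i(b_i+\eta A^i\bullet I)y_i$ s.t. $C-\sum_iA^iy_i+\varepsilon I\succeq 0$. For $(\varepsilon,\eta)\ne(0,0)$, $v(\varepsilon,\eta)$ is the common optimal value of these two problems, and $v_a(\theta)=\lim_{t\downarrow0}v(t\cos\theta,t\sin\theta)$ for $\theta\in[0,\pi/2]$. *)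

theory Defs
  imports "HOL-Analysis.Analysis" "HOL-Library.Numeral_Type"
begin

definition psd :: "real^'n^'n \<Rightarrow> bool" where
  "psd X \<longleftrightarrow> transpose X = X \<and> (\<forall>x. 0 \<le> x \<bullet> (X *v x))"

definition frob :: "real^'n^'n \<Rightarrow> real^'n^'n \<Rightarrow> real" (infixl "\<bullet>\<^sub>F" 70) where
  "A \<bullet>\<^sub>F X = (\<Sum>i\<in>UNIV. \<Sum>j\<in>UNIV. A$i$j * X$i$j)"

definition primal_val :: "real^'n^'n \<Rightarrow> ('m \<Rightarrow> real^'n^'n) \<Rightarrow> real^'m \<Rightarrow> real" where
  "primal_val C A b = Inf {C \<bullet>\<^sub>F X | X. psd X \<and> (\<forall>i. A i \<bullet>\<^sub>F X = b$i)}"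

definition dual_val :: "real^'n^'n \<Rightarrow> ('m::finite \<Rightarrow> real^'n^'n) \<Rightarrow> real^'m \<Rightarrow> real" where
  "dual_val C A b = Sup {b \<bullet> y | y. psd (C - (\<Sum>i\<in>UNIV. y$i *\<^sub>R A i))}"

text \<open>Regularized value v(eps,eta): optimal value of P(eps,eta) (which equals that of
  D(eps,eta) for (eps,eta) \<noteq> (0,0)).\<close>
definition v_reg :: "real^'n^'n \<Rightarrow> ('m \<Rightarrow> real^'n^'n) \<Rightarrow> real^'m \<Rightarrow> real \<Rightarrow> real \<Rightarrow> real" where
  "v_reg C A b \<epsilon> \<eta> =
     primal_val (C + \<epsilon> *\<^sub>R mat 1) A (\<chi> i. b$i + \<eta> * (A i \<bullet>\<^sub>F mat 1))"

text \<open>The concrete example; indices 1,2,3,4 of type 4 (where 4 = 0 in type 4, still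
  a fourth distinct index).\<close>

definition C_ex :: "real^4^4" where
  "C_ex = (\<chi> i j. if i = 1 \<and> j = 1 then 1 else 0)"

definition A1_ex :: "real^4^4" where
  "A1_ex = (\<chi> i j. if (i = 1 \<and> j = 1) \<or> (i = 2 \<and> j = 3) \<or> (i = 3 \<and> j = 2) then 1 else 0)"

definition A2_ex :: "real^4^4" where
  "A2_ex = (\<chi> i j. if i = 2 \<and> j = 2 then 1 else 0)"

definition A3_ex :: "real^4^4" where
  "A3_ex = (\<chi> i j. if (i = 1 \<and> j = 3) \<or> (i = 3 \<and> j = 1) \<or> (i = 1 \<and> j = 4) \<or>
                         (i = 4 \<and> j = 1) \<or> (i = 3 \<and> j = 3) then 1 else 0)"

definition A_ex :: "3 \<Rightarrow> real^4^4" where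
  "A_ex k = (if k = 1 then A1_ex else if k = 2 then A2_ex else A3_ex)"

definition b_ex :: "real^3" where
  "b_ex = (\<chi> i. if i = 1 then 1 else 0)"

end

theory Submission
  imports Defs
begin
definition vec4 :: "real \<Rightarrow> real \<Rightarrow> real \<Rightarrow> real \<Rightarrow> real^4" where
 "vec4 a b c d = (\<chi> i. if i = 1 then a else if i = 2 then b else if i = 3 then c else d)"
lemma vec4_nth[simp]: "vec4 a b c d $ 1 = a" "vec4 a b c d $ 2 = b" "vec4 a b c d $ 3 = c" "vec4 a b c d $ 4 = d"
  by (simp_all add: vec4_def)
lemma qf4: "x \<bullet> (X *v x) =
  x$1*(X$1$1*x$1 + X$1$2*x$2 + X$1$3*x$3 + X$1$4*x$4) + x$2*(X$2$1*x$1 + X$2$2*x$2 + X$2$3*x$3 + X$2$4*x$4)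
 + x$3*(X$3$1*x$1 + X$3$2*x$2 + X$3$3*x$3 + X$3$4*x$4) + x$4*(X$4$1*x$1 + X$4$2*x$2 + X$4$3*x$3 + X$4$4*x$4)"
  for X :: "real^4^4"
  by (simp add: inner_vec_def matrix_vector_mult_def sum_4)
lemma psd_qf: "psd X \<Longrightarrow> 0 \<le> a*(X$1$1*a + X$1$2*b + X$1$3*c + X$1$4*d) + b*(X$2$1*a + X$2$2*b + X$2$3*c + X$2$4*d)
 + c*(X$3$1*a + X$3$2*b + X$3$3*c + X$3$4*d) + d*(X$4$1*a + X$4$2*b + X$4$3*c + X$4$4*d)"
  for X :: "real^4^4"
  unfolding psd_def using qf4[of "vec4 a b c d" X] by (metis vec4_nth)
lemma psd_sym: "psd X \<Longrightarrow> X$j$i = X$i$j"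
  unfolding psd_def by (metis transpose_def vec_lambda_beta)
lemma psd_diag: "psd X \<Longrightarrow> 0 \<le> X$1$1 \<and> 0 \<le> X$2$2 \<and> 0 \<le> X$3$3 \<and> 0 \<le> X$4$4"
  for X :: "real^4^4"
  using psd_qf[of X 1 0 0 0] psd_qf[of X 0 1 0 0] psd_qf[of X 0 0 1 0] psd_qf[of X 0 0 0 1] by simp
lemma frob4: "A \<bullet>\<^sub>F X = (A$1$1*X$1$1 + A$1$2*X$1$2 + A$1$3*X$1$3 + A$1$4*X$1$4) +
  (A$2$1*X$2$1 + A$2$2*X$2$2 + A$2$3*X$2$3 + A$2$4*X$2$4) +
  (A$3$1*X$3$1 + A$3$2*X$3$2 + A$3$3*X$3$3 + A$3$4*X$3$4) +
  (A$4$1*X$4$1 + A$4$2*X$4$2 + A$4$3*X$4$3 + A$4$4*X$4$4)" for A X :: "real^4^4"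
  by (simp add: frob_def sum_4)

lemma lin_zero: fixes a b :: real assumes "\<forall>k. 0 \<le> a*k^2 + b*k" shows "b = 0"
proof (rule ccontr)
  assume "b \<noteq> 0"
  define k where "k = -b/(2*(\<bar>a\<bar>+1))"
  have "0 \<le> a*k^2 + b*k" using assms by blast
  also have "a*k^2 + b*k = k*(a*k+b)" by (simp add: power2_eq_square algebra_simps)
  also have "\<dots> < 0"
  proof -
    have p: "\<bar>a\<bar>+1 > 0" by simp
    have "a*k + b = b*(1 - a/(2*(\<bar>a\<bar>+1)))" unfolding k_def by (simp add: field_simps)
    moreover have "1 - a/(2*(\<bar>a\<bar>+1)) > 0" using p by (simp add: field_simps abs_if split: if_splits) 
    moreover have "k = -b * (1/(2*(\<bar>a\<bar>+1)))" unfolding k_def by simp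
    ultimately have "k*(a*k+b) = -(b*b) * ((1/(2*(\<bar>a\<bar>+1))) * (1 - a/(2*(\<bar>a\<bar>+1))))" by simp
    moreover have "b*b > 0" using \<open>b \<noteq> 0\<close> by (metis not_real_square_gt_zero)
    moreover have "(1/(2*(\<bar>a\<bar>+1))) * (1 - a/(2*(\<bar>a\<bar>+1))) > 0" using p \<open>1 - a/(2*(\<bar>a\<bar>+1)) > 0\<close> by simp
    ultimately show ?thesis by (simp add: mult_pos_pos)
  qed
  finally show False by simp
qed

lemma lin_zero2: fixes b c :: real assumes "\<forall>k. 0 \<le> b*k + c" shows "b = 0"
proof (rule ccontr)
  assume "b \<noteq> 0"
  have "0 \<le> b*(-(\<bar>c\<bar>+1)/b) + c" using assms by blast
  also have "b*(-(\<bar>c\<bar>+1)/b) = -(\<bar>c\<bar>+1)" using \<open>b \<noteq> 0\<close> by simp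
  finally show False by linarith
qed

lemma cons_iff: "(\<forall>i. A_ex i \<bullet>\<^sub>F X = (\<chi> i. b_ex$i + \<eta> * (A_ex i \<bullet>\<^sub>F mat 1))$i) \<longleftrightarrow>
   X$1$1 + X$2$3 + X$3$2 = 1+\<eta> \<and> X$2$2 = \<eta> \<and> X$1$3+X$3$1+X$1$4+X$4$1+X$3$3 = \<eta>"
  by (simp add: forall_3 frob4 A_ex_def A1_ex_def A2_ex_def A3_ex_def mat_def b_ex_def) argo

lemma cons0_iff: "(\<forall>i. A_ex i \<bullet>\<^sub>F X = b_ex$i) \<longleftrightarrow>
   X$1$1 + X$2$3 + X$3$2 = 1 \<and> X$2$2 = 0 \<and> X$1$3+X$3$1+X$1$4+X$4$1+X$3$3 = 0"
  by (simp add: forall_3 frob4 A_ex_def A1_ex_def A2_ex_def A3_ex_def b_ex_def) argo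

lemma obj_eq: "(C_ex + \<epsilon> *\<^sub>R mat 1) \<bullet>\<^sub>F X = X$1$1 + \<epsilon>*(X$1$1+X$2$2+X$3$3+X$4$4)"
  by (simp add: frob4 C_ex_def mat_def algebra_simps)

lemma C_psd: "psd C_ex"
  unfolding psd_def
  by (auto simp: qf4 C_ex_def vec_eq_iff transpose_def forall_4)

lemma primal: "primal_val C_ex A_ex b_ex = 1"
proof -
  have "{C_ex \<bullet>\<^sub>F X | X. psd X \<and> (\<forall>i. A_ex i \<bullet>\<^sub>F X = b_ex$i)} = {1}"
  proof (intro equalityI subsetI)
    fix z assume "z \<in> {C_ex \<bullet>\<^sub>F X | X. psd X \<and> (\<forall>i. A_ex i \<bullet>\<^sub>F X = b_ex$i)}"
    then obtain X :: "real^4^4" where X: "psd X" "X$1$1 + X$2$3 + X$3$2 = 1" "X$2$2 = 0" and z: "z = X$1$1"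
      using cons0_iff obj_eq[of 0] by auto
    have s: "X$3$2 = X$2$3" using psd_sym[OF X(1)] by blast
    have "\<forall>k. 0 \<le> (2*X$2$3)*k + X$3$3"
    proof
      fix k show "0 \<le> (2*X$2$3)*k + X$3$3"
        using psd_qf[OF X(1), of 0 k 1 0] X(3) s by (simp add: algebra_simps)
    qed
    hence "X$2$3 = 0" using lin_zero2 by fastforce
    then show "z \<in> {1}" using X s z by simp
  next
    fix z assume "z \<in> {1::real}"
    hence "z = C_ex \<bullet>\<^sub>F C_ex \<and> psd C_ex \<and> (\<forall>i. A_ex i \<bullet>\<^sub>F C_ex = b_ex$i)"
      using C_psd unfolding cons0_iff by (simp add: frob4 C_ex_def)
    then show "z \<in> {C_ex \<bullet>\<^sub>F X | X. psd X \<and> (\<forall>i. A_ex i \<bullet>\<^sub>F X = b_ex$i)}" by blast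
  qed
  then show ?thesis unfolding primal_val_def by simp
qed

lemma dual: "dual_val C_ex A_ex b_ex = 0"
proof -
  have "{b_ex \<bullet> y | y. psd (C_ex - (\<Sum>i\<in>UNIV. y$i *\<^sub>R A_ex i))} = {0}"
  proof (intro equalityI subsetI)
    fix z assume "z \<in> {b_ex \<bullet> y | y. psd (C_ex - (\<Sum>i\<in>UNIV. y$i *\<^sub>R A_ex i))}"
    then obtain y where y: "psd (C_ex - (\<Sum>i\<in>UNIV. y$i *\<^sub>R A_ex i))" and z: "z = b_ex \<bullet> y" by auto
    define S where "S = C_ex - (\<Sum>i\<in>UNIV. y$i *\<^sub>R A_ex i)"
    have S: "psd S" using y S_def by simp
    have e: "S$1$1 = 1 - y$1" "S$1$4 = - y$3" "S$4$1 = - y$3" "S$4$4 = 0" "S$1$2 = 0" "S$1$3 = -y$3"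
       "S$2$2 = -y$2" "S$2$3 = -y$1" "S$3$2 = -y$1" "S$3$3 = -y$3" "S$2$4 = 0" "S$3$4 = 0"
      "S$2$1 = 0" "S$3$1 = -y$3" "S$4$2 = 0" "S$4$3 = 0"
      unfolding S_def by (simp_all add: sum_3 C_ex_def A_ex_def A1_ex_def A2_ex_def A3_ex_def)
    have "\<forall>k. 0 \<le> (1 - y$1)*k^2 + (-2*y$3)*k"
    proof
      fix k show "0 \<le> (1 - y$1)*k^2 + (-2*y$3)*k"
        using psd_qf[OF S, of k 0 0 1] e by (simp add: algebra_simps power2_eq_square)
    qed
    hence y3: "y$3 = 0" using lin_zero by fastforce
    have "\<forall>k. 0 \<le> (- y$2)*k^2 + (-2*y$1)*k"
    proof
      fix k show "0 \<le> (- y$2)*k^2 + (-2*y$1)*k"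
        using psd_qf[OF S, of 0 k 1 0] e y3 by (simp add: algebra_simps power2_eq_square)
    qed
    hence y1: "y$1 = 0" using lin_zero by fastforce
    have "z = y$1" unfolding z by (simp add: inner_vec_def sum_3 b_ex_def)
    then show "z \<in> {0}" using y1 by simp
  next
    fix z assume "z \<in> {0::real}"
    hence "z = b_ex \<bullet> 0 \<and> psd (C_ex - (\<Sum>i\<in>UNIV. (0::real^3)$i *\<^sub>R A_ex i))"
      using C_psd by simp
    then show "z \<in> {b_ex \<bullet> y | y. psd (C_ex - (\<Sum>i\<in>UNIV. y$i *\<^sub>R A_ex i))}" by blast
  qed
  then show ?thesis unfolding dual_val_def by simp
qed

definition FS :: "real \<Rightarrow> real \<Rightarrow> real set" where
  "FS \<epsilon> \<eta> = {X$1$1 + \<epsilon>*(X$1$1+X$2$2+X$3$3+X$4$4) | X::real^4^4. psd X \<and>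
     X$1$1 + X$2$3 + X$3$2 = 1+\<eta> \<and> X$2$2 = \<eta> \<and> X$1$3+X$3$1+X$1$4+X$4$1+X$3$3 = \<eta>}"

lemma vreg_eq: "v_reg C_ex A_ex b_ex \<epsilon> \<eta> = Inf (FS \<epsilon> \<eta>)"
  unfolding v_reg_def primal_val_def FS_def obj_eq cons_iff by simp

lemma FS_bdd: "\<epsilon> \<ge> 0 \<Longrightarrow> z \<in> FS \<epsilon> \<eta> \<Longrightarrow> 0 \<le> z"
  unfolding FS_def using psd_diag by fastforce

lemma FS_bdd_below: "\<epsilon> \<ge> 0 \<Longrightarrow> bdd_below (FS \<epsilon> \<eta>)"
  using FS_bdd by (meson bdd_below.I)

lemma diag_mem: assumes "\<epsilon> \<ge> 0" "\<eta> \<ge> 0"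
  shows "1+\<eta>+\<epsilon>*(1+3*\<eta>) \<in> FS \<epsilon> \<eta>"
proof -
  define D :: "real^4^4" where "D = (\<chi> i j. if i = j then (if i = 1 then 1+\<eta> else if i = 4 then 0 else \<eta>) else 0)"
  have e: "D$1$1 = 1+\<eta>" "D$2$2 = \<eta>" "D$3$3 = \<eta>" "D$4$4 = 0" "D$2$3 = 0" "D$3$2 = 0"
    "D$1$3 = 0" "D$3$1 = 0" "D$1$4 = 0" "D$4$1 = 0"
    unfolding D_def by simp_all
  have "psd D"
    unfolding psd_def
  proof
    show "transpose D = D" unfolding D_def by (auto simp: vec_eq_iff transpose_def)
    show "\<forall>x. 0 \<le> x \<bullet> (D *v x)"
    proof
      fix x :: "real^4"
      have "x \<bullet> (D *v x) = (1+\<eta>)*(x$1)^2 + \<eta>*(x$2)^2 + \<eta>*(x$3)^2"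
        unfolding qf4 D_def by (simp add: power2_eq_square algebra_simps)
      also have "\<dots> \<ge> 0" using assms by simp
      finally show "0 \<le> x \<bullet> (D *v x)" .
    qed
  qed
  moreover have "1+\<eta>+\<epsilon>*(1+3*\<eta>) = D$1$1 + \<epsilon>*(D$1$1+D$2$2+D$3$3+D$4$4)" using e by simp
  ultimately show ?thesis unfolding FS_def using e by fastforce
qed

lemma Y_mem: assumes "\<eta> > 0"
  shows "\<eta> \<in> FS 0 \<eta>"
proof -
  define m where "m = (\<eta> - 1/(4*\<eta>))/2"
  define Y :: "real^4^4" where "Y = (\<chi> i j. if i = 1 \<and> j = 1 then \<eta> else
      if (i = 1 \<and> j = 4) \<or> (i = 4 \<and> j = 1) then m else
      if i = 4 \<and> j = 4 then m^2/\<eta> else if i = 2 \<and> j = 2 then \<eta> else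
      if (i = 2 \<and> j = 3) \<or> (i = 3 \<and> j = 2) then 1/2 else
      if i = 3 \<and> j = 3 then 1/(4*\<eta>) else 0)"
  have e: "Y$1$1 = \<eta>" "Y$2$2 = \<eta>" "Y$3$3 = 1/(4*\<eta>)" "Y$4$4 = m^2/\<eta>" "Y$2$3 = 1/2" "Y$3$2 = 1/2"
    "Y$1$3 = 0" "Y$3$1 = 0" "Y$1$4 = m" "Y$4$1 = m" "Y$1$2 = 0" "Y$2$1 = 0" "Y$2$4 = 0" "Y$4$2 = 0"
    "Y$3$4 = 0" "Y$4$3 = 0"
    unfolding Y_def by simp_all
  have "psd Y"
    unfolding psd_def
  proof
    show "transpose Y = Y" unfolding Y_def by (auto simp: vec_eq_iff transpose_def forall_4)
    show "\<forall>x. 0 \<le> x \<bullet> (Y *v x)"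
    proof
      fix x :: "real^4"
      have "x \<bullet> (Y *v x) = ((\<eta>*x$1 + m*x$4)^2 + (\<eta>*x$2 + x$3/2)^2)/\<eta>"
        unfolding qf4 e using assms by (simp add: power2_eq_square field_simps)
      also have "\<dots> \<ge> 0" using assms by simp
      finally show "0 \<le> x \<bullet> (Y *v x)" .
    qed
  qed
  moreover have "\<eta> = Y$1$1 + 0*(Y$1$1+Y$2$2+Y$3$3+Y$4$4)" using e by simp
  moreover have "Y$1$3+Y$3$1+Y$1$4+Y$4$1+Y$3$3 = \<eta>" unfolding e m_def using assms by (simp add: field_simps)
  ultimately show ?thesis unfolding FS_def using e by fastforce
qed

lemma lower_alg:
  fixes x11 x13 x14 x22 x23 x33 x44 \<epsilon> s \<eta> \<delta> r :: real
  assumes pos: "\<epsilon> > 0" "s > 0" and d: "\<delta> = s^2/\<epsilon> + 2* s" and r: "r = 2*(1-\<delta>)^2/s"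
    and c1: "x11 + 2*x23 = 1+\<eta>" and c2: "x22 = \<eta>" and c3: "2*x13 + 2*x14 + x33 = \<eta>"
    and q1: "0 \<le> s^2*x11 + 2* s*\<epsilon>*x14 + \<epsilon>^2*x44"
    and q2: "0 \<le> 4* s^2*x11 + 4* s^2*x13 + s^2*x33"
    and q3: "0 \<le> 4*(1-\<delta>)^2*x22 - 4*(1-\<delta>)* s*x23 + s^2*x33"
    and n: "0 \<le> x11" "0 \<le> x22" "0 \<le> x33"
  shows "(1+\<eta>)*(1-\<delta>) - \<eta>*r - \<eta>* s \<le> x11 + \<epsilon>*(x11+x22+x33+x44)"
proof -
  define Q1 where "Q1 = (s^2/\<epsilon>)*x11 + 2* s*x14 + \<epsilon>*x44"
  define Q2 where "Q2 = 2* s*x11 + 2* s*x13 + s/2*x33"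
  define Q3 where "Q3 = r*x22 - 2*(1-\<delta>)*x23 + s/2*x33"
  have "Q1 = (s^2*x11 + 2* s*\<epsilon>*x14 + \<epsilon>^2*x44)/\<epsilon>" unfolding Q1_def using pos by (simp add: field_simps power2_eq_square)
  hence h1: "0 \<le> Q1" using q1 pos by simp
  have "Q2 = (4* s^2*x11 + 4* s^2*x13 + s^2*x33)/(2* s)" unfolding Q2_def using pos by (simp add: field_simps power2_eq_square)
  hence h2: "0 \<le> Q2" using q2 pos by simp
  have "Q3 = (4*(1-\<delta>)^2*x22 - 4*(1-\<delta>)* s*x23 + s^2*x33)/(2* s)" unfolding Q3_def r using pos by (simp add: field_simps power2_eq_square)
  hence h3: "0 \<le> Q3" using q3 pos by simp
  have x23: "x23 = (1+\<eta>-x11)/2" using c1 by simp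
  have x14: "x14 = (\<eta> - x33 - 2*x13)/2" using c3 by simp
  have "x11 + \<epsilon>*(x11+x22+x33+x44) - ((1+\<eta>)*(1-\<delta>) - \<eta>*r - \<eta>* s) = Q1 + Q2 + Q3 + \<epsilon>*(x11+x22+x33)"
    unfolding Q1_def Q2_def Q3_def x23 x14 c2 d using pos by (simp add: field_simps power2_eq_square)
  moreover have "0 \<le> \<epsilon>*(x11+x22+x33)" using pos n by simp
  ultimately show ?thesis using h1 h2 h3 by linarith
qed

lemma FS_lower: assumes "\<epsilon> > 0" "s > 0" "\<eta> \<ge> 0"
  shows "(1+\<eta>)*(1-(s^2/\<epsilon> + 2* s)) - \<eta>*(2*(1-(s^2/\<epsilon> + 2* s))^2/s) - \<eta>* s \<le> Inf (FS \<epsilon> \<eta>)"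
proof (rule cInf_greatest)
  show "FS \<epsilon> \<eta> \<noteq> {}" using diag_mem[of \<epsilon> \<eta>] assms by auto
  fix z assume "z \<in> FS \<epsilon> \<eta>"
  then obtain X :: "real^4^4" where X: "psd X" "X$1$1 + X$2$3 + X$3$2 = 1+\<eta>" "X$2$2 = \<eta>"
     "X$1$3+X$3$1+X$1$4+X$4$1+X$3$3 = \<eta>" and z: "z = X$1$1 + \<epsilon>*(X$1$1+X$2$2+X$3$3+X$4$4)"
    unfolding FS_def by blast
  have sy: "X$3$2 = X$2$3" "X$3$1 = X$1$3" "X$4$1 = X$1$4" using psd_sym[OF X(1)] by auto
  define \<delta> where "\<delta> = s^2/\<epsilon> + 2* s"
  have q1: "0 \<le> s^2*X$1$1 + 2* s*\<epsilon>*X$1$4 + \<epsilon>^2*X$4$4"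
    using psd_qf[OF X(1), of s 0 0 \<epsilon>] sy by (simp add: power2_eq_square algebra_simps)
  have q2: "0 \<le> 4* s^2*X$1$1 + 4* s^2*X$1$3 + s^2*X$3$3"
    using psd_qf[OF X(1), of "2* s" 0 s 0] sy by (simp add: power2_eq_square algebra_simps)
  have q3: "0 \<le> 4*(1-\<delta>)^2*X$2$2 - 4*(1-\<delta>)* s*X$2$3 + s^2*X$3$3"
    using psd_qf[OF X(1), of 0 "2*(1-\<delta>)" "-s" 0] sy by (simp add: power2_eq_square algebra_simps)
  show "(1+\<eta>)*(1-(s^2/\<epsilon> + 2* s)) - \<eta>*(2*(1-(s^2/\<epsilon> + 2* s))^2/s) - \<eta>* s \<le> z"
    unfolding z \<delta>_def[symmetric]
    by (rule lower_alg[OF assms(1,2) \<delta>_def refl _ X(3) _ q1 q2 q3])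
       (use X sy psd_diag[OF X(1)] in auto)
qed


lemma upper_gen: assumes "\<epsilon> \<ge> 0" "\<eta> \<ge> 0" shows "Inf (FS \<epsilon> \<eta>) \<le> 1+\<eta>+\<epsilon>*(1+3*\<eta>)"
  by (rule cInf_lower[OF diag_mem[OF assms] FS_bdd_below[OF assms(1)]])

lemma lim_theta:
  assumes th: "\<theta> \<in> {0..<pi/2}"
  shows "((\<lambda>t. v_reg C_ex A_ex b_ex (t * cos \<theta>) (t * sin \<theta>)) \<longlongrightarrow> 1) (at_right 0)"
proof -
  define c where "c = cos \<theta>"
  define w where "w = sin \<theta>"
  have c: "c > 0" unfolding c_def using th by (intro cos_gt_zero_pi) auto
  have w: "w \<ge> 0" unfolding w_def using th by (intro sin_ge_zero) auto
  define L where "L = (\<lambda>u::real. (1+u^4*w)*(1-(u^2/c + 2*u^3)) - 2*u*w*(1-(u^2/c+2*u^3))^2 - u^7*w)"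
  define U where "U = (\<lambda>t::real. 1 + t*w + t*c*(1+3*(t*w)))"
  have lowb: "L (sqrt (sqrt t)) \<le> v_reg C_ex A_ex b_ex (t * cos \<theta>) (t * sin \<theta>)" if t: "t > 0" for t
  proof -
    define u where "u = sqrt (sqrt t)"
    have u: "u > 0" unfolding u_def using t by simp
    have tu: "t = u^4" unfolding u_def using t
      by (metis less_eq_real_def numeral_Bit0 power_add real_sqrt_pow2 real_sqrt_ge_zero power2_eq_square power4_eq_xxxx)
    have ep: "t*c > 0" using t c by simp
    have et: "t*w \<ge> 0" using t w by simp
    have s: "u^3 > 0" using u by simp
    have "(1+t*w)*(1-((u^3)^2/(t*c) + 2*u^3)) - (t*w)*(2*(1-((u^3)^2/(t*c) + 2*u^3))^2/u^3) - (t*w)*u^3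
          \<le> Inf (FS (t*c) (t*w))"
      by (rule FS_lower[OF ep s et])
    moreover have "(u^3)^2/(t*c) = u^2/c" unfolding tu using u c by (simp add: field_simps power2_eq_square) (simp add: eval_nat_numeral)
    moreover have "(t*w)*(2*Z/u^3) = 2*u*w*Z" for Z
    proof -
      have u4: "u^4 = u * u^3" by (simp add: eval_nat_numeral)
      show ?thesis unfolding tu u4 using u by (simp add: field_simps)
    qed
    moreover have "(t*w)*u^3 = u^7*w" unfolding tu by (simp add: algebra_simps flip: power_add)
    ultimately have "L u \<le> Inf (FS (t*c) (t*w))" unfolding L_def tu by simp
    then show ?thesis unfolding u_def vreg_eq c_def w_def .
  qed
  have upb: "v_reg C_ex A_ex b_ex (t * cos \<theta>) (t * sin \<theta>) \<le> U t" if t: "t > 0" for t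
    unfolding vreg_eq U_def c_def[symmetric] w_def[symmetric]
    by (rule upper_gen) (use t c w in auto)
  have "((\<lambda>t. L (sqrt (sqrt t))) \<longlongrightarrow> L (sqrt (sqrt 0))) (at 0)"
    unfolding L_def using c by (intro tendsto_intros) auto
  hence l1: "((\<lambda>t. L (sqrt (sqrt t))) \<longlongrightarrow> 1) (at_right 0)"
    unfolding L_def by (auto intro: tendsto_mono[OF at_within_le_at])
  have "(U \<longlongrightarrow> U 0) (at 0)" unfolding U_def by (intro tendsto_intros)
  hence l2: "(U \<longlongrightarrow> 1) (at_right 0)"
    unfolding U_def by (auto intro: tendsto_mono[OF at_within_le_at])
  show ?thesis
    by (rule tendsto_sandwich[OF _ _ l1 l2])
       (use eventually_at_right_less[of 0] lowb upb in \<open>auto elim: eventually_mono\<close>)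
qed

lemma lim_half:
  "((\<lambda>t. v_reg C_ex A_ex b_ex (t * cos (pi/2)) (t * sin (pi/2))) \<longlongrightarrow> 0) (at_right 0)"
proof -
  have lowb: "0 \<le> v_reg C_ex A_ex b_ex (t * cos (pi/2)) (t * sin (pi/2))" if t: "t > 0" for t
    unfolding vreg_eq using Y_mem[OF t] FS_bdd[of 0] by (auto intro: cInf_greatest)
  have upb: "v_reg C_ex A_ex b_ex (t * cos (pi/2)) (t * sin (pi/2)) \<le> t" if t: "t > 0" for t
    unfolding vreg_eq using cInf_lower[OF Y_mem[OF t] FS_bdd_below[of 0]] by simp
  have l2: "((\<lambda>t::real. t) \<longlongrightarrow> 0) (at_right 0)" by (intro tendsto_ident_at)
  show ?thesis
    by (rule tendsto_sandwich[OF _ _ tendsto_const l2])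
       (use eventually_at_right_less[of 0] lowb upb in \<open>auto elim: eventually_mono\<close>)
qed

theorem theorem3:
  shows "primal_val C_ex A_ex b_ex = 1 \<and> dual_val C_ex A_ex b_ex = 0 \<and>
    (\<forall>\<theta>\<in>{0..<pi/2}.
       ((\<lambda>t. v_reg C_ex A_ex b_ex (t * cos \<theta>) (t * sin \<theta>)) \<longlongrightarrow> primal_val C_ex A_ex b_ex) (at_right 0)) \<and>
    ((\<lambda>t. v_reg C_ex A_ex b_ex (t * cos (pi/2)) (t * sin (pi/2))) \<longlongrightarrow> dual_val C_ex A_ex b_ex) (at_right 0)"
  unfolding primal dual using lim_theta lim_half by blast

end
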